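(* Let $R$ be a commutative Noetherian local ring. Let $\mathcal{P} \subset R$ be a finite subset and let $\mathcal{P}_0, \mathcal{P}_1, \ldots, \mathcal{P}_r$ be subsets of $\mathcal{P}$; set $c_\ell = \#\mathcal{P}_\ell$ for all $\ell$ and $I = (\mathcal{P})$. Assume: (Ba1) $\mathcal{P} = \mathcal{P}_0 \cup \mathcal{P}_1 \cup \cdots \cup \mathcal{P}_r$; (Ba2) $\#\mathcal{P}_0 = 1$; (Ba3) for each $\ell$ with $0 < \ell \le r$ and $c_\ell \ge 2$, there exists an integer $n_\ell$ with $2 \le n_\ell \le c_\ell$ such that for arbitrary $n_\ell$ distinct elements $p_1, \ldots, p_{n_\ell} \in \mathcal{P}_\ell$ there exist an integer $\ell'$ with $0 \le \ell' < \ell$ and elements $p' \in \mathcal{P}_{\ell'}$, $b \in I^{n_\ell - 1}$ such that $p_1 p_2 \cdots p_{n_\ell} = p' b$. For $0 \le \ell \le r$ with $c_\ell = 1$, set $n_\ell = 2$. For each $\ell = 0, 1, \ldots, r$, let $A^{(\ell)} = (a^{(\ell)}_{ij})$ be an $(n_\ell - 1) \times c_\ell$ matrix with entries in $R$ such that all maximal minors of $A^{(\ell)}$ are units in $R$. Write $\mathcal{P}_\ell = \{p^{(\ell)}_1, \ldots, p^{(\ell)}_{c_\ell}\}$, and set $$g^{(\ell)}_i = \sum_{j=1}^{c_\ell} a^{(\ell)}_{ij} p^{(\ell)}_j \quad (1 \le i \le n_\ell - 1,\ 0 \le \ell \le r), \qquad J = (g^{(\ell)}_i : 0 \le \ell \le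 r,\ 1 \le i \le n_\ell - 1).$$ Then $J$ is a reduction of $I$.
   Context: An ideal $J \subseteq I$ is called a reduction of $I$ if there exists an integer $s \ge 1$ such that $I^{s+1} = J I^s$. *)

theory Defs
  imports "Jordan_Normal_Form.Determinant" "Jordan_Normal_Form.DL_Submatrix"
begin

definition is_ideal :: "'a::comm_ring_1 set \<Rightarrow> bool" where
  "is_ideal I \<longleftrightarrow> 0 \<in> I \<and> (\<forall>x\<in>I. \<forall>y\<in>I. x + y \<in> I) \<and> (\<forall>r. \<forall>x\<in>I. r * x \<in> I)"

definition ideal_gen :: "'a::comm_ring_1 set \<Rightarrow> 'a set" where
  "ideal_gen S = {x. \<exists>F f. finite F \<and> F \<subseteq> S \<and> x = (\<Sum>s\<in>F. f s * s)}"

definition ideal_mult :: "'a::comm_ring_1 set \<Rightarrow> 'a set \<Rightarrow> 'a set" where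
  "ideal_mult I J = ideal_gen {i * j | i j. i \<in> I \<and> j \<in> J}"

fun ideal_pow :: "'a::comm_ring_1 set \<Rightarrow> nat \<Rightarrow> 'a set" where
  "ideal_pow I 0 = UNIV"
| "ideal_pow I (Suc k) = ideal_mult I (ideal_pow I k)"

definition is_reduction :: "'a::comm_ring_1 set \<Rightarrow> 'a set \<Rightarrow> bool" where
  "is_reduction J I \<longleftrightarrow> J \<subseteq> I \<and> (\<exists>s\<ge>1. ideal_pow I (s + 1) = ideal_mult J (ideal_pow I s))"

definition maximal_ideal :: "'a::comm_ring_1 set \<Rightarrow> bool" where
  "maximal_ideal m \<longleftrightarrow> is_ideal m \<and> m \<noteq> UNIV \<and>
     (\<forall>J. is_ideal J \<and> m \<subseteq> J \<longrightarrow> J = m \<or> J = UNIV)"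

definition local_ring :: "'a::comm_ring_1 itself \<Rightarrow> bool" where
  "local_ring (_::'a itself) \<longleftrightarrow> (\<exists>!m::'a set. maximal_ideal m)"

definition noetherian_ring :: "'a::comm_ring_1 itself \<Rightarrow> bool" where
  "noetherian_ring (_::'a itself) \<longleftrightarrow>
     (\<forall>I::'a set. is_ideal I \<longrightarrow> (\<exists>F. finite F \<and> I = ideal_gen F))"

end

theory Submission
  imports Defs
begin

lemma ideal_sum: assumes "is_ideal K" "finite F" "\<forall>s\<in>F. h s \<in> K" shows "sum h F \<in> K"
  using assms(2,3)
proof (induction F rule: finite_induct)
  case empty then show ?case using assms(1) by (simp add: is_ideal_def)
next
  case (insert x F) then show ?case using assms(1) by (simp add: is_ideal_def)
qed

lemma ideal_mul: "is_ideal K \<Longrightarrow> x \<in> K \<Longrightarrow> r * x \<in> K"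
  by (auto simp: is_ideal_def)

lemma ideal_mulr: "is_ideal K \<Longrightarrow> x \<in> K \<Longrightarrow> x * r \<in> K"
  by (metis ideal_mul mult.commute)

lemma ideal_add: "is_ideal K \<Longrightarrow> x \<in> K \<Longrightarrow> y \<in> K \<Longrightarrow> x + y \<in> K"
  by (auto simp: is_ideal_def)

lemma ideal_diff: "is_ideal K \<Longrightarrow> x \<in> K \<Longrightarrow> y \<in> K \<Longrightarrow> x - y \<in> K"
proof -
  assume a: "is_ideal K" "x \<in> K" "y \<in> K"
  have "(-1) * y \<in> K" using a ideal_mul by blast
  then show ?thesis using a ideal_add[of K x "(-1)*y"] by simp
qed

lemma ideal_gen_ideal: "is_ideal (ideal_gen S)"
  unfolding is_ideal_def
proof (intro conjI ballI allI)
  show "0 \<in> ideal_gen S" unfolding ideal_gen_def by (rule CollectI, rule exI[of _ "{}"]) auto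
next
  fix x y assume "x \<in> ideal_gen S" "y \<in> ideal_gen S"
  then obtain F f G g where F: "finite F" "F \<subseteq> S" "x = (\<Sum>s\<in>F. f s * s)"
    and G: "finite G" "G \<subseteq> S" "y = (\<Sum>s\<in>G. g s * s)" unfolding ideal_gen_def by blast
  define h where "h = (\<lambda>s. (if s \<in> F then f s else 0) + (if s \<in> G then g s else 0))"
  have "x = (\<Sum>s\<in>F\<union>G. (if s \<in> F then f s else 0) * s)"
    unfolding F(3) using F(1) G(1)
    by (intro sum.mono_neutral_cong_left) auto
  moreover have "y = (\<Sum>s\<in>F\<union>G. (if s \<in> G then g s else 0) * s)"
    unfolding G(3) using F(1) G(1)
    by (intro sum.mono_neutral_cong_left) auto
  ultimately have "x + y = (\<Sum>s\<in>F\<union>G. h s * s)"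
    unfolding h_def by (simp add: sum.distrib distrib_right)
  then show "x + y \<in> ideal_gen S" unfolding ideal_gen_def
    by (intro CollectI exI[of _ "F \<union> G"] exI[of _ h]) (use F G in auto)
next
  fix r x assume "x \<in> ideal_gen S"
  then obtain F f where F: "finite F" "F \<subseteq> S" "x = (\<Sum>s\<in>F. f s * s)"
    unfolding ideal_gen_def by blast
  have "r * x = (\<Sum>s\<in>F. (r * f s) * s)" unfolding F(3) by (simp add: sum_distrib_left mult.assoc)
  then show "r * x \<in> ideal_gen S" unfolding ideal_gen_def
    by (intro CollectI exI[of _ F] exI[of _ "\<lambda>s. r * f s"]) (use F in auto)
qed

lemma ideal_gen_sub: "S \<subseteq> ideal_gen S"
proof
  fix s assume "s \<in> S"
  then show "s \<in> ideal_gen S" unfolding ideal_gen_def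
    by (intro CollectI exI[of _ "{s}"] exI[of _ "\<lambda>_. 1"]) auto
qed

lemma ideal_gen_least: "is_ideal K \<Longrightarrow> S \<subseteq> K \<Longrightarrow> ideal_gen S \<subseteq> K"
proof
  fix x assume K: "is_ideal K" "S \<subseteq> K" and "x \<in> ideal_gen S"
  then obtain F f where F: "finite F" "F \<subseteq> S" "x = (\<Sum>s\<in>F. f s * s)"
    unfolding ideal_gen_def by blast
  show "x \<in> K" unfolding F(3) using F K by (intro ideal_sum ballI ideal_mul) auto
qed

lemma ideal_gen_mono: "S \<subseteq> T \<Longrightarrow> ideal_gen S \<subseteq> ideal_gen T"
  by (meson ideal_gen_ideal ideal_gen_least ideal_gen_sub order_trans)




lemma gen_mult1:
  assumes K: "is_ideal K" and gen: "\<forall>s\<in>S. s * y \<in> K" and x: "x \<in> ideal_gen S"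
  shows "x * y \<in> K"
proof -
  obtain F f where F: "finite F" "F \<subseteq> S" "x = (\<Sum>s\<in>F. f s * s)"
    using x unfolding ideal_gen_def by blast
  have "x * y = (\<Sum>s\<in>F. f s * (s * y))" unfolding F(3) by (simp add: sum_distrib_right mult.assoc)
  also have "\<dots> \<in> K"
  proof (rule ideal_sum[OF K F(1)], rule ballI)
    fix s assume "s \<in> F"
    then have "s * y \<in> K" using F(2) gen by auto
    then show "f s * (s * y) \<in> K" by (rule ideal_mul[OF K])
  qed
  finally show ?thesis .
qed

lemma gen_mult:
  assumes K: "is_ideal K" and gen: "\<forall>s\<in>S. \<forall>t\<in>T. s * t \<in> K"
    and x: "x \<in> ideal_gen S" and y: "y \<in> ideal_gen T"
  shows "x * y \<in> K"
proof (rule gen_mult1[OF K _ x], intro ballI)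
  fix s assume s: "s \<in> S"
  have "y * s \<in> K" by (rule gen_mult1[OF K _ y]) (use gen s in \<open>auto simp: mult.commute\<close>)
  then show "s * y \<in> K" by (simp add: mult.commute)
qed

lemma ideal_pow_ideal: "is_ideal (ideal_pow I k)"
  by (cases k) (simp_all add: ideal_mult_def ideal_gen_ideal, simp add: is_ideal_def)

lemma ideal_pow_mult1: "x \<in> I \<Longrightarrow> y \<in> ideal_pow I k \<Longrightarrow> x * y \<in> ideal_pow I (Suc k)"
  using ideal_gen_sub[of "{i * j |i j. i \<in> I \<and> j \<in> ideal_pow I k}"] by (auto simp: ideal_mult_def)

lemma ideal_pow_mult: "x \<in> ideal_pow I a \<Longrightarrow> y \<in> ideal_pow I b \<Longrightarrow> x * y \<in> ideal_pow I (a + b)"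
proof (induction a arbitrary: x)
  case 0
  then show ?case using ideal_mul[OF ideal_pow_ideal] by simp
next
  case (Suc a)
  have "x \<in> ideal_gen {i * j |i j. i \<in> I \<and> j \<in> ideal_pow I a}" using Suc.prems by (simp add: ideal_mult_def)
  then show ?case
  proof (rule gen_mult1[OF ideal_pow_ideal, rotated], intro ballI)
    fix s assume "s \<in> {i * j |i j. i \<in> I \<and> j \<in> ideal_pow I a}"
    then obtain i j where "s = i * j" "i \<in> I" "j \<in> ideal_pow I a" by blast
    then show "s * y \<in> ideal_pow I (Suc a + b)"
      using Suc.IH[of j] Suc.prems ideal_pow_mult1 by (simp add: mult.assoc)
  qed
qed




lemma ideal_mult_gen: "a \<in> A \<Longrightarrow> b \<in> B \<Longrightarrow> a * b \<in> ideal_mult A B"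
  using ideal_gen_sub[of "{i * j |i j. i \<in> A \<and> j \<in> B}"] by (auto simp: ideal_mult_def)

lemma ideal_mult_ideal: "is_ideal (ideal_mult A B)"
  by (simp add: ideal_mult_def ideal_gen_ideal)

lemma ideal_mult_pow: "x \<in> ideal_mult A (ideal_pow I a) \<Longrightarrow> y \<in> ideal_pow I b \<Longrightarrow> x * y \<in> ideal_mult A (ideal_pow I (a + b))"
proof (rule gen_mult1[OF ideal_mult_ideal, where S="{i * j |i j. i \<in> A \<and> j \<in> ideal_pow I a}"], intro ballI)
  fix s assume y: "y \<in> ideal_pow I b" and "s \<in> {i * j |i j. i \<in> A \<and> j \<in> ideal_pow I a}"
  then obtain i j where "s = i * j" "i \<in> A" "j \<in> ideal_pow I a" by blast
  then show "s * y \<in> ideal_mult A (ideal_pow I (a + b))"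
    using ideal_pow_mult[of j I a y b] y ideal_mult_gen by (simp add: mult.assoc)
next
  assume "x \<in> ideal_mult A (ideal_pow I a)"
  then show "x \<in> ideal_gen {i * j |i j. i \<in> A \<and> j \<in> ideal_pow I a}" by (simp add: ideal_mult_def)
qed

lemma ideal_mult_sub_pow: "A \<subseteq> I \<Longrightarrow> is_ideal I \<Longrightarrow> ideal_mult A (ideal_pow I k) \<subseteq> ideal_pow I (Suc k)"
  unfolding ideal_mult_def[of A]
  by (rule ideal_gen_least[OF ideal_pow_ideal]) (auto intro: ideal_pow_mult1[of _ I, simplified])

lemma prod_mset_pow: "set_mset M \<subseteq> I \<Longrightarrow> prod_mset M \<in> ideal_pow I (size M)"
proof (induction M)
  case empty then show ?case by simp
next
  case (add x M) then show ?case using ideal_pow_mult1 by auto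
qed

lemma power_pow: "x \<in> I \<Longrightarrow> x ^ k \<in> ideal_pow I k"
  using prod_mset_pow[of "replicate_mset k x" I] by auto




definition Mon :: "'a::comm_ring_1 set \<Rightarrow> nat \<Rightarrow> 'a set" where
  "Mon P k = {prod_mset M | M. set_mset M \<subseteq> P \<and> size M = k}"

lemma MonI: "set_mset M \<subseteq> P \<Longrightarrow> size M = k \<Longrightarrow> prod_mset M \<in> Mon P k"
  unfolding Mon_def by blast

lemma MonE: "t \<in> Mon P k \<Longrightarrow> (\<And>M. t = prod_mset M \<Longrightarrow> set_mset M \<subseteq> P \<Longrightarrow> size M = k \<Longrightarrow> thesis) \<Longrightarrow> thesis"
  unfolding Mon_def by blast

lemma pow_sub_Mon:
  "ideal_pow (ideal_gen P) k \<subseteq> ideal_gen (Mon P k)"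
proof (induction k)
  case 0
  show ?case
  proof
    fix z :: 'a
    have "(1::'a) \<in> Mon P 0" using MonI[of "{#}" P 0] by simp
    then have "z * 1 \<in> ideal_gen (Mon P 0)"
      by (intro ideal_mul[OF ideal_gen_ideal] subsetD[OF ideal_gen_sub])
    then show "z \<in> ideal_gen (Mon P 0)" by simp
  qed
next
  case (Suc k)
  show ?case unfolding ideal_pow.simps ideal_mult_def
  proof (rule ideal_gen_least[OF ideal_gen_ideal], rule subsetI)
    fix s assume "s \<in> {i * j |i j. i \<in> ideal_gen P \<and> j \<in> ideal_pow (ideal_gen P) k}"
    then obtain i j where s: "s = i * j" "i \<in> ideal_gen P" "j \<in> ideal_pow (ideal_gen P) k" by blast
    have "i * j \<in> ideal_gen (Mon P (Suc k))"
    proof (rule gen_mult[OF ideal_gen_ideal _ s(2)])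
      show "j \<in> ideal_gen (Mon P k)" using Suc s(3) by blast
      show "\<forall>s\<in>P. \<forall>t\<in>Mon P k. s * t \<in> ideal_gen (Mon P (Suc k))"
      proof (intro ballI)
        fix s t assume st: "s \<in> P" "t \<in> Mon P k"
        obtain M where M: "t = prod_mset M" "set_mset M \<subseteq> P" "size M = k" using st(2) by (rule MonE)
        have "prod_mset (add_mset s M) \<in> Mon P (Suc k)" using M st by (intro MonI) auto
        then have "s * t \<in> Mon P (Suc k)" using M by simp
        then show "s * t \<in> ideal_gen (Mon P (Suc k))"
          using ideal_gen_sub by blast
      qed
    qed
    then show "s \<in> ideal_gen (Mon P (Suc k))" using s by simp
  qed
qed




lemma PH:
  assumes S: "finite S" "S \<subseteq> I"
    and int: "\<forall>x\<in>S. x ^ Suc e \<in> ideal_mult A (ideal_pow I e)"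
    and M: "set_mset M \<subseteq> S" "Suc (card S * e) \<le> size M"
  shows "prod_mset M \<in> ideal_mult A (ideal_pow I (size M - 1))"
proof -
  have "\<exists>x\<in>S. Suc e \<le> count M x"
  proof (rule ccontr)
    assume "\<not> ?thesis"
    then have le: "\<forall>x\<in>S. count M x \<le> e" by auto
    have "size M = sum (count M) (set_mset M)" by (simp add: size_multiset_overloaded_eq)
    also have "\<dots> = sum (count M) S" using S M by (intro sum.mono_neutral_left) (auto simp: not_in_iff)
    also have "\<dots> \<le> sum (\<lambda>_. e) S" using le by (intro sum_mono) auto
    also have "\<dots> = card S * e" by simp
    finally show False using M by simp
  qed
  then obtain x where x: "x \<in> S" "Suc e \<le> count M x" by blast
  define M' where "M' = M - replicate_mset (Suc e) x"
  have sub: "replicate_mset (Suc e) x \<subseteq># M" using x(2) by (simp only: count_le_replicate_mset_subset_eq)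
  have MM: "M = replicate_mset (Suc e) x + M'" unfolding M'_def using sub
    by (metis subset_mset.add_diff_inverse)
  have sz: "size M = Suc e + size M'" using MM by (simp only: size_union size_replicate_mset)
  have "set_mset M' \<subseteq> I" using MM M S by auto
  then have "prod_mset M' \<in> ideal_pow I (size M')" by (rule prod_mset_pow)
  then have "x ^ Suc e * prod_mset M' \<in> ideal_mult A (ideal_pow I (e + size M'))"
    using int x by (intro ideal_mult_pow) auto
  moreover have "prod_mset M = x ^ Suc e * prod_mset M'" using MM by simp
  ultimately show ?thesis using sz by simp
qed




lemma int_mono:
  assumes "x \<in> I" "x ^ Suc e \<in> ideal_mult A (ideal_pow I e)" "e \<le> e'"
  shows "x ^ Suc e' \<in> ideal_mult A (ideal_pow I e')"
proof -
  have "x ^ Suc e * x ^ (e' - e) \<in> ideal_mult A (ideal_pow I (e + (e' - e)))"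
    using assms power_pow by (intro ideal_mult_pow) auto
  moreover have "Suc e + (e' - e) = Suc e'" using assms(3) by simp
  then have "x ^ Suc e * x ^ (e' - e) = x ^ Suc e'"
    by (metis power_add)
  ultimately show ?thesis using assms(3) by simp
qed

lemma common_bound:
  assumes "finite S" "S \<subseteq> I" "\<forall>x\<in>S. \<exists>e. x ^ Suc e \<in> ideal_mult A (ideal_pow I e)"
  shows "\<exists>e. \<forall>x\<in>S. x ^ Suc e \<in> ideal_mult A (ideal_pow I e)"
proof -
  obtain f where f: "\<forall>x\<in>S. x ^ Suc (f x) \<in> ideal_mult A (ideal_pow I (f x))"
    using bchoice[OF assms(3)] by blast
  have "\<forall>x\<in>S. x ^ Suc (sum f S) \<in> ideal_mult A (ideal_pow I (sum f S))"
  proof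
    fix x assume x: "x \<in> S"
    show "x ^ Suc (sum f S) \<in> ideal_mult A (ideal_pow I (sum f S))"
      using int_mono[of x I "f x" A "sum f S"] f x assms(1,2) member_le_sum[of x S f] by auto
  qed
  then show ?thesis by blast
qed





lemma pick_lessThan: "i < d \<Longrightarrow> pick {..<d} i = i"
proof -
  assume i: "i < d"
  have e: "{a. a < d \<and> a \<in> (UNIV::nat set)} = {..<d}" by auto
  have "pick UNIV i = pick {a. a < d \<and> a \<in> (UNIV::nat set)} i"
    by (rule pick_reduce_set) (use i e in simp)
  then show ?thesis using e pick_UNIV by simp
qed

lemma lin_alg:
  fixes Am :: "'a::comm_ring_1 mat" and q :: "nat \<Rightarrow> 'a"
  assumes Am: "Am \<in> carrier_mat d c" and C: "C \<subseteq> {..<c}" "card C = d"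
    and unit: "det (submatrix Am {..<d} C) dvd 1" and a: "a \<in> C"
  shows "\<exists>u v. q a = (\<Sum>i<d. v i * (\<Sum>j<c. Am $$ (i,j) * q j)) + (\<Sum>j\<in>{..<c}-C. u j * q j)"
proof -
  define B where "B = submatrix Am {..<d} C"
  have finC: "finite C" using C finite_subset by blast
  have dr: "dim_row B = d" unfolding B_def dim_submatrix using Am
    by (simp add: Collect_conj_eq lessThan_def[symmetric])
  have dc: "dim_col B = d" unfolding B_def dim_submatrix using Am C
  proof -
    have "{j. j < dim_col Am \<and> j \<in> C} = C" using Am C by auto
    then show "card {j. j < dim_col Am \<and> j \<in> C} = d" using C by simp
  qed
  have Bc: "B \<in> carrier_mat d d" using dr dc by auto
  have Bij: "B $$ (i, b) = Am $$ (i, pick C b)" if "i < d" "b < d" for i b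
  proof -
    have "B $$ (i,b) = Am $$ (pick {..<d} i, pick C b)" unfolding B_def
      by (rule submatrix_index) (use that dr dc in \<open>simp_all add: B_def dim_submatrix\<close>)
    then show ?thesis using pick_lessThan that by simp
  qed
  define Adj where "Adj = adj_mat B"
  have Adjc: "Adj \<in> carrier_mat d d" and AB: "Adj * B = det B \<cdot>\<^sub>m 1\<^sub>m d"
    using adj_mat[OF Bc] unfolding Adj_def by auto
  obtain w where w: "w * det B = 1" using unit unfolding B_def by (metis dvd_def mult.commute)
  define b0 where "b0 = card {x\<in>C. x < a}"
  have pa: "pick C b0 = a" unfolding b0_def using a by (rule pick_card_in_set)
  have b0d: "b0 < d"
  proof -
    have "{x\<in>C. x < a} \<subset> C" using a by auto
    then show ?thesis unfolding b0_def using C finC psubset_card_mono by metis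
  qed
  define cf where "cf j = (\<Sum>i<d. Adj $$ (b0,i) * Am $$ (i,j))" for j
  have cfC: "cf j = (if j = a then det B else 0)" if j: "j \<in> C" for j
  proof -
    define bj where "bj = card {x\<in>C. x < j}"
    have pj: "pick C bj = j" unfolding bj_def using j by (rule pick_card_in_set)
    have bjd: "bj < d"
    proof -
      have "{x\<in>C. x < j} \<subset> C" using j by auto
      then show ?thesis unfolding bj_def using C finC psubset_card_mono by metis
    qed
    have "(Adj * B) $$ (b0, bj) = (\<Sum>i<d. Adj $$ (b0,i) * B $$ (i,bj))"
      using Adjc Bc b0d bjd by (simp add: scalar_prod_def atLeast0LessThan)
    also have "\<dots> = cf j" unfolding cf_def using Bij bjd pj by (intro sum.cong) auto
    finally have "cf j = (Adj * B) $$ (b0, bj)" by simp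
    also have "\<dots> = det B * (if b0 = bj then 1 else 0)" unfolding AB using b0d bjd by simp
    also have "(b0 = bj) = (j = a)" using pa pj b0_def bj_def by metis
    finally show ?thesis by simp
  qed
  have "(\<Sum>i<d. Adj $$ (b0,i) * (\<Sum>j<c. Am $$ (i,j) * q j)) = (\<Sum>j<c. cf j * q j)"
    unfolding cf_def by (simp add: sum_distrib_left sum_distrib_right sum.swap[of _ "{..<c}"] mult.assoc)
  also have "\<dots> = (\<Sum>j\<in>C. cf j * q j) + (\<Sum>j\<in>{..<c}-C. cf j * q j)"
    using C by (metis add.commute finite_lessThan sum.subset_diff)
  also have "(\<Sum>j\<in>C. cf j * q j) = (\<Sum>j\<in>C. if j = a then det B * q a else 0)"
    using cfC by (intro sum.cong) auto
  also have "\<dots> = det B * q a" using a finC by simp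
  finally have eq: "(\<Sum>i<d. Adj $$ (b0,i) * (\<Sum>j<c. Am $$ (i,j) * q j)) = det B * q a + (\<Sum>j\<in>{..<c}-C. cf j * q j)" .
  have "q a = w * (det B * q a)" using w by (simp add: mult.assoc[symmetric])
  also have "\<dots> = (\<Sum>i<d. (w * Adj $$ (b0,i)) * (\<Sum>j<c. Am $$ (i,j) * q j)) + (\<Sum>j\<in>{..<c}-C. (- w * cf j) * q j)"
    using arg_cong[OF eq, of "\<lambda>t. w * t"]
    by (simp add: sum_distrib_left mult.assoc algebra_simps sum_negf)
  finally show ?thesis by (intro exI[of _ "\<lambda>j. - w * cf j"] exI[of _ "\<lambda>i. w * Adj $$ (b0,i)"])
qed




definition JI :: "'a::comm_ring_1 set \<Rightarrow> 'a set \<Rightarrow> nat \<Rightarrow> 'a set" where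
  "JI G P k = ideal_mult (ideal_gen G) (ideal_pow (ideal_gen P) k)"

definition KK :: "'a::comm_ring_1 set \<Rightarrow> 'a set \<Rightarrow> 'a set \<Rightarrow> nat \<Rightarrow> 'a set" where
  "KK G P Q d = ideal_gen ({q * y | q y. q \<in> Q \<and> y \<in> ideal_pow (ideal_gen P) d} \<union> JI G P d)"

lemma JI_ideal: "is_ideal (JI G P k)"
  unfolding JI_def by (rule ideal_mult_ideal)

lemma KK_ideal: "is_ideal (KK G P Q d)"
  unfolding KK_def by (rule ideal_gen_ideal)

lemma JI_KK: "x \<in> JI G P d \<Longrightarrow> x \<in> KK G P Q d"
  unfolding KK_def by (rule subsetD[OF ideal_gen_sub], rule UnI2)

lemma QK: "q \<in> Q \<Longrightarrow> y \<in> ideal_pow (ideal_gen P) d \<Longrightarrow> q * y \<in> KK G P Q d"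
  unfolding KK_def
  by (rule subsetD[OF ideal_gen_sub], rule UnI1, rule CollectI, intro exI[of _ q] exI[of _ y]) simp

lemma prod_set_pow:
  assumes "finite S" "\<forall>k\<in>S. f k \<in> I" shows "prod f S \<in> ideal_pow I (card S)"
  using assms
proof (induction S rule: finite_induct)
  case empty then show ?case by simp
next
  case (insert x F) then show ?case using ideal_pow_mult1[of "f x" I "prod f F" "card F"] by simp
qed

lemma extend_set:
  assumes "S \<subseteq> {..<c}" "card S \<le> d" "d \<le> c"
  obtains C where "S \<subseteq> C" "C \<subseteq> {..<c}" "card C = d"
proof -
  have fS: "finite S" using assms(1) finite_subset by blast
  have "card ({..<c} - S) = c - card S" using assms(1) fS by (simp add: card_Diff_subset)
  then have "d - card S \<le> card ({..<c} - S)" using assms by simp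
  then obtain T where T: "T \<subseteq> {..<c} - S" "card T = d - card S" "finite T"
    by (rule obtain_subset_with_card_n)
  have "card (S \<union> T) = card S + card T" using T fS by (intro card_Un_disjoint) auto
  then have "card (S \<union> T) = d" using T assms by simp
  then show ?thesis using that[of "S \<union> T"] T assms(1) by auto
qed

lemma psi:
  fixes pl :: "nat \<Rightarrow> 'a::comm_ring_1"
  assumes plP: "\<forall>k<c. pl k \<in> ideal_gen P"
    and mc: "m - 1 \<le> c"
    and ba3: "\<forall>S. S \<subseteq> {..<c} \<and> card S = m \<longrightarrow>
        (\<exists>q\<in>Q. \<exists>b\<in>ideal_pow (ideal_gen P) (m - 1). prod pl S = q * b)"
    and la: "\<forall>C. C \<subseteq> {..<c} \<and> card C = m - 1 \<longrightarrow>
        (\<forall>a\<in>C. \<exists>g0\<in>ideal_gen G. \<exists>u. pl a = g0 + (\<Sum>k\<in>{..<c}-C. u k * pl k))"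
  shows "\<forall>S M. S \<subseteq> {..<c} \<longrightarrow> card S + t = m \<longrightarrow> set_mset M \<subseteq> pl ` S \<longrightarrow> size M = t
          \<longrightarrow> prod pl S * prod_mset M \<in> KK G P Q (m - 1)"
proof (induction t)
  case 0
  show ?case
  proof (intro allI impI)
    fix S and M :: "'a multiset"
    assume S: "S \<subseteq> {..<c}" "card S + 0 = m" and M: "size M = 0"
    obtain q b where qb: "q \<in> Q" "b \<in> ideal_pow (ideal_gen P) (m - 1)" "prod pl S = q * b"
      using ba3 S by auto
    show "prod pl S * prod_mset M \<in> KK G P Q (m - 1)" using M qb QK by auto
  qed
next
  case (Suc t)
  show ?case
  proof (intro allI impI)
    fix S and M :: "'a multiset"
    assume S: "S \<subseteq> {..<c}" "card S + Suc t = m" and M: "set_mset M \<subseteq> pl ` S" "size M = Suc t"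
    have fS: "finite S" using S finite_subset by blast
    obtain y where y: "y \<in># M" using M by (metis Suc_neq_Zero multiset_nonemptyE size_empty)
    then obtain a0 where a0: "a0 \<in> S" "y = pl a0" using M by auto
    define M' where "M' = M - {#y#}"
    have MM: "M = add_mset y M'" unfolding M'_def using y by simp
    obtain C where C: "S \<subseteq> C" "C \<subseteq> {..<c}" "card C = m - 1"
      using extend_set[OF S(1), of "m - 1"] S mc by force
    obtain g0 u where g0: "g0 \<in> ideal_gen G" "pl a0 = g0 + (\<Sum>k\<in>{..<c}-C. u k * pl k)"
      using la C a0 by blast
    have "prod pl S * prod_mset M = g0 * (prod pl S * prod_mset M')
        + (\<Sum>k\<in>{..<c}-C. u k * (prod pl (insert k S) * prod_mset M'))"
    proof -
      have "prod pl S * prod_mset M = pl a0 * (prod pl S * prod_mset M')"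
        using MM a0 by (simp add: ac_simps)
      also have "\<dots> = g0 * (prod pl S * prod_mset M') + (\<Sum>k\<in>{..<c}-C. u k * (pl k * prod pl S * prod_mset M'))"
      proof -
        have "pl a0 * (prod pl S * prod_mset M') = g0 * (prod pl S * prod_mset M') + (\<Sum>k\<in>{..<c}-C. (u k * pl k) * (prod pl S * prod_mset M'))"
          unfolding g0(2) by (simp only: distrib_right sum_distrib_right)
        also have "(\<Sum>k\<in>{..<c}-C. (u k * pl k) * (prod pl S * prod_mset M')) = (\<Sum>k\<in>{..<c}-C. u k * (pl k * prod pl S * prod_mset M'))"
          by (intro sum.cong) (auto simp: ac_simps)
        finally show ?thesis .
      qed
      also have "(\<Sum>k\<in>{..<c}-C. u k * (pl k * prod pl S * prod_mset M'))
          = (\<Sum>k\<in>{..<c}-C. u k * (prod pl (insert k S) * prod_mset M'))"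
      proof (rule sum.cong[OF refl])
        fix k assume "k \<in> {..<c} - C"
        then have "k \<notin> S" using C by auto
        then show "u k * (pl k * prod pl S * prod_mset M') = u k * (prod pl (insert k S) * prod_mset M')"
          using fS by simp
      qed
      finally show ?thesis .
    qed
    also have "\<dots> \<in> KK G P Q (m - 1)"
    proof (rule ideal_add[OF KK_ideal])
      have "prod pl S \<in> ideal_pow (ideal_gen P) (card S)"
        using fS S plP by (intro prod_set_pow) auto
      moreover have "prod_mset M' \<in> ideal_pow (ideal_gen P) (size M')"
      proof (rule prod_mset_pow, rule subsetI)
        fix z assume "z \<in> set_mset M'"
        then have "z \<in> pl ` S" using M MM by auto
        then show "z \<in> ideal_gen P" using S plP by auto
      qed
      ultimately have "prod pl S * prod_mset M' \<in> ideal_pow (ideal_gen P) (card S + size M')"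
        by (rule ideal_pow_mult)
      moreover have "card S + size M' = m - 1" using S M MM by simp
      ultimately have "g0 * (prod pl S * prod_mset M') \<in> JI G P (m - 1)"
        unfolding JI_def using g0 ideal_mult_gen by metis
      then show "g0 * (prod pl S * prod_mset M') \<in> KK G P Q (m - 1)" by (rule JI_KK)
    next
      show "(\<Sum>k\<in>{..<c}-C. u k * (prod pl (insert k S) * prod_mset M')) \<in> KK G P Q (m - 1)"
      proof (rule ideal_sum[OF KK_ideal], simp, rule ballI, rule ideal_mul[OF KK_ideal])
        fix k assume k: "k \<in> {..<c} - C"
        have kS: "k \<notin> S" using k C by auto
        have "card (insert k S) + t = m" using kS fS S by simp
        moreover have "insert k S \<subseteq> {..<c}" using k S by auto
        moreover have "set_mset M' \<subseteq> pl ` insert k S" using M MM by auto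
        moreover have "size M' = t" using M MM by simp
        ultimately show "prod pl (insert k S) * prod_mset M' \<in> KK G P Q (m - 1)"
          using Suc.IH by blast
      qed
    qed
    finally show "prod pl S * prod_mset M \<in> KK G P Q (m - 1)" .
  qed
qed




definition GN :: "'a::comm_ring_1 set \<Rightarrow> 'a set \<Rightarrow> nat \<Rightarrow> nat \<Rightarrow> 'a set" where
  "GN P Q m' N = {prod_mset Mq * y | Mq y. set_mset Mq \<subseteq> Q \<and> size Mq = Suc N \<and> y \<in> ideal_pow (ideal_gen P) (Suc N * m')}"

definition KN :: "'a::comm_ring_1 set \<Rightarrow> 'a set \<Rightarrow> 'a set \<Rightarrow> nat \<Rightarrow> nat \<Rightarrow> 'a set" where
  "KN G P Q m' N = ideal_gen (GN P Q m' N \<union> JI G P (N * Suc m' + m'))"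

lemma GNI: "set_mset Mq \<subseteq> Q \<Longrightarrow> size Mq = Suc N \<Longrightarrow> y \<in> ideal_pow (ideal_gen P) (Suc N * m')
   \<Longrightarrow> prod_mset Mq * y \<in> KN G P Q m' N"
proof -
  assume a: "set_mset Mq \<subseteq> Q" "size Mq = Suc N" "y \<in> ideal_pow (ideal_gen P) (Suc N * m')"
  have "prod_mset Mq * y \<in> GN P Q m' N" unfolding GN_def using a by blast
  then show ?thesis unfolding KN_def by (rule subsetD[OF ideal_gen_sub, OF UnI1])
qed

lemma GNE: "z \<in> GN P Q m' N \<Longrightarrow> (\<And>Mq y. z = prod_mset Mq * y \<Longrightarrow> set_mset Mq \<subseteq> Q \<Longrightarrow> size Mq = Suc N
   \<Longrightarrow> y \<in> ideal_pow (ideal_gen P) (Suc N * m') \<Longrightarrow> thesis) \<Longrightarrow> thesis"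
  unfolding GN_def by blast

lemma JI_KN: "z \<in> JI G P (N * Suc m' + m') \<Longrightarrow> z \<in> KN G P Q m' N"
  unfolding KN_def by (rule subsetD[OF ideal_gen_sub, OF UnI2])

lemma KN_ideal: "is_ideal (KN G P Q m' N)"
  unfolding KN_def by (rule ideal_gen_ideal)

lemma power_step:
  fixes x :: "'a::comm_ring_1"
  assumes finQ: "finite Q" and QI: "Q \<subseteq> ideal_gen P" and GI: "ideal_gen G \<subseteq> ideal_gen P"
    and intQ: "\<forall>y\<in>Q. y ^ Suc e0 \<in> JI G P e0"
    and xK: "x ^ Suc m' \<in> KK G P Q m'"
  shows "\<exists>e. x ^ Suc e \<in> JI G P e"
proof -
  let ?I = "ideal_gen P"
  have II: "is_ideal ?I" by (rule ideal_gen_ideal)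
  have JIsub: "JI G P k \<subseteq> ideal_pow ?I (Suc k)" for k
    unfolding JI_def by (rule ideal_mult_sub_pow[OF GI II])
  have KKgen: "z \<in> {q * y | q y. q \<in> Q \<and> y \<in> ideal_pow ?I m'} \<union> JI G P m' \<Longrightarrow>
      (\<And>q y. z = q * y \<Longrightarrow> q \<in> Q \<Longrightarrow> y \<in> ideal_pow ?I m' \<Longrightarrow> thesis) \<Longrightarrow>
      (z \<in> JI G P m' \<Longrightarrow> thesis) \<Longrightarrow> thesis" for z thesis by blast
  have step: "x ^ (Suc m' * Suc N) \<in> KN G P Q m' N" for N
  proof (induction N)
    case 0
    have "KK G P Q m' \<subseteq> KN G P Q m' 0"
      unfolding KK_def
    proof (rule ideal_gen_least[OF KN_ideal], rule subsetI)
      fix z assume "z \<in> {q * y | q y. q \<in> Q \<and> y \<in> ideal_pow ?I m'} \<union> JI G P m'"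
      then show "z \<in> KN G P Q m' 0"
      proof (rule KKgen)
        fix q y assume "z = q * y" "q \<in> Q" "y \<in> ideal_pow ?I m'"
        then show ?thesis using GNI[where Mq="{#q#}" and Q=Q and N=0 and y=y and P=P and m'=m' and G=G] by simp
      next
        assume "z \<in> JI G P m'" then show ?thesis using JI_KN[where N=0 and m'=m' and Q=Q] by simp
      qed
    qed
    then show ?case using xK by auto
  next
    case (Suc N)
    have eq: "x ^ (Suc m' * Suc (Suc N)) = x ^ Suc m' * x ^ (Suc m' * Suc N)"
      by (simp add: power_add[symmetric] algebra_simps)
    have "x ^ Suc m' * x ^ (Suc m' * Suc N) \<in> KN G P Q m' (Suc N)"
    proof (rule gen_mult[OF KN_ideal _ xK[unfolded KK_def] Suc.IH[unfolded KN_def]], intro ballI)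
      fix s t assume s: "s \<in> {q * y | q y. q \<in> Q \<and> y \<in> ideal_pow ?I m'} \<union> JI G P m'"
        and t: "t \<in> GN P Q m' N \<union> JI G P (N * Suc m' + m')"
      have arith: "N * Suc m' + m' + Suc m' = Suc N * Suc m' + m'" "m' + Suc (N * Suc m' + m') = Suc N * Suc m' + m'"
        "m' + (Suc N + Suc N * m') = Suc N * Suc m' + m'" "m' + Suc N * m' = Suc (Suc N) * m'"
        by (simp_all add: algebra_simps)
      show "s * t \<in> KN G P Q m' (Suc N)"
        using s
      proof (rule KKgen)
        fix q y1 assume s1: "s = q * y1" "q \<in> Q" "y1 \<in> ideal_pow ?I m'"
        have sI: "s \<in> ideal_pow ?I (Suc m')" using s1 QI ideal_pow_mult1 by blast
        show ?thesis using t
        proof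
          assume "t \<in> GN P Q m' N"
          then obtain Mq y where t1: "t = prod_mset Mq * y" "set_mset Mq \<subseteq> Q" "size Mq = Suc N"
            "y \<in> ideal_pow ?I (Suc N * m')" by (rule GNE)
          have "y1 * y \<in> ideal_pow ?I (m' + Suc N * m')" using s1 t1 by (intro ideal_pow_mult)
          then have "prod_mset (add_mset q Mq) * (y1 * y) \<in> KN G P Q m' (Suc N)"
            using t1 s1 arith by (intro GNI) auto
          then show ?thesis using s1 t1 by (simp add: ac_simps)
        next
          assume "t \<in> JI G P (N * Suc m' + m')"
          then have "t * s \<in> JI G P (N * Suc m' + m' + Suc m')"
            unfolding JI_def using sI by (intro ideal_mult_pow)
          then show ?thesis using arith JI_KN by (metis mult.commute)
        qed
      next
        assume s2: "s \<in> JI G P m'"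
        show ?thesis using t
        proof
          assume "t \<in> GN P Q m' N"
          then obtain Mq y where t1: "t = prod_mset Mq * y" "set_mset Mq \<subseteq> Q" "size Mq = Suc N"
            "y \<in> ideal_pow ?I (Suc N * m')" by (rule GNE)
          have "prod_mset Mq \<in> ideal_pow ?I (size Mq)" using t1(2) QI by (intro prod_mset_pow) auto
          then have "prod_mset Mq \<in> ideal_pow ?I (Suc N)" using t1(3) by simp
          then have "t \<in> ideal_pow ?I (Suc N + Suc N * m')" unfolding t1(1) using t1(4) by (rule ideal_pow_mult)
          then have "s * t \<in> JI G P (m' + (Suc N + Suc N * m'))"
            unfolding JI_def using s2 unfolding JI_def by (intro ideal_mult_pow)
          then show ?thesis using arith JI_KN by metis
        next
          assume "t \<in> JI G P (N * Suc m' + m')"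
          then have "t \<in> ideal_pow ?I (Suc (N * Suc m' + m'))" using JIsub by blast
          then have "s * t \<in> JI G P (m' + Suc (N * Suc m' + m'))"
            using s2 unfolding JI_def by (intro ideal_mult_pow)
          then show ?thesis using arith JI_KN by metis
        qed
      qed
    qed
    then show ?case using eq by simp
  qed
  define N0 where "N0 = card Q * e0"
  have "KN G P Q m' N0 \<subseteq> JI G P (N0 * Suc m' + m')"
    unfolding KN_def
  proof (rule ideal_gen_least[OF JI_ideal], rule subsetI)
    fix z assume "z \<in> GN P Q m' N0 \<union> JI G P (N0 * Suc m' + m')"
    then show "z \<in> JI G P (N0 * Suc m' + m')"
    proof
      assume "z \<in> GN P Q m' N0"
      then obtain Mq y where t1: "z = prod_mset Mq * y" "set_mset Mq \<subseteq> Q" "size Mq = Suc N0"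
        "y \<in> ideal_pow ?I (Suc N0 * m')" by (rule GNE)
      have "prod_mset Mq \<in> ideal_mult (ideal_gen G) (ideal_pow ?I (size Mq - 1))"
        using PH[OF finQ QI, of e0 "ideal_gen G" Mq] intQ t1 unfolding JI_def N0_def by auto
      then have "prod_mset Mq * y \<in> JI G P (N0 + Suc N0 * m')"
        unfolding JI_def using t1 by (intro ideal_mult_pow) auto
      moreover have "N0 + Suc N0 * m' = N0 * Suc m' + m'" by (simp add: algebra_simps)
      ultimately have "prod_mset Mq * y \<in> JI G P (N0 * Suc m' + m')" by metis
      then show ?thesis using t1(1) by simp
    qed
  qed
  then have "x ^ Suc (N0 * Suc m' + m') \<in> JI G P (N0 * Suc m' + m')"
    using step[of N0] by (auto simp: algebra_simps)
  then show ?thesis by blast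
qed




theorem theorem2p5:
  fixes P :: "'a::comm_ring_1 set"
    and Ps :: "nat \<Rightarrow> 'a set"
    and r :: nat
    and n :: "nat \<Rightarrow> nat"
    and p :: "nat \<Rightarrow> nat \<Rightarrow> 'a"
    and A :: "nat \<Rightarrow> 'a mat"
  assumes noeth: "noetherian_ring TYPE('a)"
    and loc: "local_ring TYPE('a)"
    and finP: "finite P"
    and sub: "\<forall>l\<le>r. Ps l \<subseteq> P"
    and Ba1: "P = (\<Union>l\<le>r. Ps l)"
    and Ba2: "card (Ps 0) = 1"
    and Ba3: "\<forall>l. 0 < l \<and> l \<le> r \<and> card (Ps l) \<ge> 2 \<longrightarrow>
               2 \<le> n l \<and> n l \<le> card (Ps l) \<and>
               (\<forall>q. inj_on q {..<n l} \<and> q ` {..<n l} \<subseteq> Ps l \<longrightarrow>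
                  (\<exists>l'<l. \<exists>p'\<in>Ps l'. \<exists>b\<in>ideal_pow (ideal_gen P) (n l - 1).
                      (\<Prod>i<n l. q i) = p' * b))"
    and n_one: "\<forall>l\<le>r. card (Ps l) = 1 \<longrightarrow> n l = 2"
    and enum: "\<forall>l\<le>r. bij_betw (p l) {..<card (Ps l)} (Ps l)"
    and Adim: "\<forall>l\<le>r. A l \<in> carrier_mat (n l - 1) (card (Ps l))"
    and Aminors: "\<forall>l\<le>r. \<forall>C. C \<subseteq> {..<card (Ps l)} \<and> card C = n l - 1 \<longrightarrow>
                    det (submatrix (A l) {..<n l - 1} C) dvd 1"
  shows "is_reduction
           (ideal_gen {(\<Sum>j<card (Ps l). A l $$ (i, j) * p l j) | l i. l \<le> r \<and> i < n l - 1})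
           (ideal_gen P)"
  proof -
  define G where "G = {(\<Sum>j<card (Ps l). A l $$ (i, j) * p l j) | l i. l \<le> r \<and> i < n l - 1}"
  let ?I = "ideal_gen P"
  have II: "is_ideal ?I" by (rule ideal_gen_ideal)
  have pPs: "p l k \<in> Ps l" if "l \<le> r" "k < card (Ps l)" for l k
    using enum that bij_betw_apply by fastforce
  have pI: "p l k \<in> ?I" if "l \<le> r" "k < card (Ps l)" for l k
    using pPs[OF that] sub that ideal_gen_sub by blast
  have GP: "G \<subseteq> ?I"
  proof
    fix g assume "g \<in> G"
    then obtain l i where g: "g = (\<Sum>j<card (Ps l). A l $$ (i, j) * p l j)" "l \<le> r" unfolding G_def by blast
    show "g \<in> ?I" unfolding g(1) using pI g(2) by (intro ideal_sum[OF II] ballI ideal_mul[OF II]) auto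
  qed
  have GI: "ideal_gen G \<subseteq> ?I" using ideal_gen_least[OF II GP] .
  have linalg: "\<exists>g0\<in>ideal_gen G. \<exists>u. p l a = g0 + (\<Sum>k\<in>{..<card (Ps l)}-C. u k * p l k)"
    if l: "l \<le> r" and C: "C \<subseteq> {..<card (Ps l)}" "card C = n l - 1" and a: "a \<in> C" for l C a
  proof -
    have Am: "A l \<in> carrier_mat (n l - 1) (card (Ps l))" using Adim l by auto
    have un: "det (submatrix (A l) {..<n l - 1} C) dvd 1" using Aminors l C by auto
    obtain u v where uv: "p l a = (\<Sum>i<n l - 1. v i * (\<Sum>j<card (Ps l). A l $$ (i,j) * p l j)) + (\<Sum>j\<in>{..<card (Ps l)}-C. u j * p l j)"
      using lin_alg[OF Am C un a, of "p l"] by blast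
    have "(\<Sum>i<n l - 1. v i * (\<Sum>j<card (Ps l). A l $$ (i,j) * p l j)) \<in> ideal_gen G"
    proof (rule ideal_sum[OF ideal_gen_ideal], simp, rule ballI, rule ideal_mul[OF ideal_gen_ideal])
      fix i assume "i \<in> {..<n l - 1}"
      then have "(\<Sum>j<card (Ps l). A l $$ (i,j) * p l j) \<in> G" unfolding G_def using l by blast
      then show "(\<Sum>j<card (Ps l). A l $$ (i,j) * p l j) \<in> ideal_gen G" using ideal_gen_sub by blast
    qed
    then show ?thesis using uv by blast
  qed
  have level: "\<forall>x\<in>Ps l. \<exists>e. x ^ Suc e \<in> JI G P e" if "l \<le> r" for l
    using that
  proof (induction l rule: less_induct)
    case (less l)
    show ?case
    proof
      fix x assume x: "x \<in> Ps l"
      define c where "c = card (Ps l)"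
      have finl: "finite (Ps l)" using sub less.prems finP finite_subset by blast
      obtain a where a: "a < c" "x = p l a"
        using enum less.prems x unfolding c_def bij_betw_def by fastforce
      have c0: "c \<noteq> 0" using finl x c_def by auto
      show "\<exists>e. x ^ Suc e \<in> JI G P e"
      proof (cases "c < 2")
        case True
        then have c1: "c = 1" using c0 by simp
        then have n2: "n l = 2" using n_one less.prems c_def by simp
        have a0: "a = 0" using a c1 by simp
        obtain g0 u where g0: "g0 \<in> ideal_gen G" "p l a = g0 + (\<Sum>k\<in>{..<card (Ps l)}-{..<1}. u k * p l k)"
          using linalg[OF less.prems, of "{..<1}" a] c1 n2 a0 c_def by auto
        have "x \<in> ideal_gen G" using g0 a c1 c_def by simp
        then have "x * 1 \<in> JI G P 0" unfolding JI_def by (intro ideal_mult_gen) auto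
        then show ?thesis by (intro exI[of _ 0]) simp
      next
        case False
        then have l0: "l \<noteq> 0" using Ba2 c_def by (metis One_nat_def lessI numeral_2_eq_2)
        have b3: "2 \<le> n l \<and> n l \<le> c \<and>
               (\<forall>q. inj_on q {..<n l} \<and> q ` {..<n l} \<subseteq> Ps l \<longrightarrow>
                  (\<exists>l'<l. \<exists>p'\<in>Ps l'. \<exists>b\<in>ideal_pow (ideal_gen P) (n l - 1).
                      (\<Prod>i<n l. q i) = p' * b))"
          using Ba3 l0 less.prems False unfolding c_def by auto
        define m where "m = n l"
        define Q where "Q = (\<Union>l'\<in>{..<l}. Ps l')"
        have QP: "Q \<subseteq> P" unfolding Q_def using sub less.prems by (auto dest: less_imp_le order_trans[of _ l r])
        have finQ: "finite Q" using QP finP finite_subset by blast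
        have QI: "Q \<subseteq> ?I" using QP ideal_gen_sub by blast
        have "\<forall>y\<in>Q. \<exists>e. y ^ Suc e \<in> JI G P e"
          unfolding Q_def using less.IH less.prems by fastforce
        then obtain e0 where e0: "\<forall>y\<in>Q. y ^ Suc e0 \<in> JI G P e0"
          using common_bound[OF finQ QI] unfolding JI_def by blast
        have injp: "inj_on (p l) {..<c}" using enum less.prems c_def bij_betw_imp_inj_on by blast
        have ba3: "\<forall>S. S \<subseteq> {..<c} \<and> card S = m \<longrightarrow>
            (\<exists>q\<in>Q. \<exists>b\<in>ideal_pow (ideal_gen P) (m - 1). prod (p l) S = q * b)"
        proof (intro allI impI)
          fix S assume S: "S \<subseteq> {..<c} \<and> card S = m"
          have fS: "finite S" using S finite_subset by blast
          obtain h where h: "bij_betw h {0..<m} S" using ex_bij_betw_nat_finite[OF fS] S by auto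
          have h': "bij_betw h {..<m} S" using h by (simp add: atLeast0LessThan)
          have inj: "inj_on (p l \<circ> h) {..<m}"
            using h' injp S by (intro comp_inj_on) (auto simp: bij_betw_def intro: inj_on_subset)
          have img: "(p l \<circ> h) ` {..<m} \<subseteq> Ps l"
            using h' S pPs less.prems c_def by (auto simp: bij_betw_def)
          obtain l' p' b where lpb: "l' < l" "p' \<in> Ps l'" "b \<in> ideal_pow (ideal_gen P) (n l - 1)"
            "(\<Prod>i<n l. (p l \<circ> h) i) = p' * b"
            using b3 inj img unfolding m_def by blast
          have "(\<Prod>i<m. (p l \<circ> h) i) = prod (p l) S"
            using prod.reindex_bij_betw[OF h', of "p l"] by simp
          then have "prod (p l) S = p' * b" using lpb m_def by simp
          moreover have "p' \<in> Q" unfolding Q_def using lpb by blast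
          ultimately show "\<exists>q\<in>Q. \<exists>b\<in>ideal_pow (ideal_gen P) (m - 1). prod (p l) S = q * b"
            using lpb m_def by blast
        qed
        have la: "\<forall>C. C \<subseteq> {..<c} \<and> card C = m - 1 \<longrightarrow>
            (\<forall>a\<in>C. \<exists>g0\<in>ideal_gen G. \<exists>u. p l a = g0 + (\<Sum>k\<in>{..<c}-C. u k * p l k))"
          using linalg[OF less.prems] unfolding c_def m_def by blast
        have plP: "\<forall>k<c. p l k \<in> ideal_gen P" using pI less.prems c_def by blast
        have nlc: "2 \<le> n l" "n l \<le> c" using b3 by auto
        have mc: "m - 1 \<le> c" using nlc m_def by simp
        have ps: "prod (p l) {a} * prod_mset (replicate_mset (m - 1) x) \<in> KK G P Q (m - 1)"
        proof -
          have H: "\<forall>S M. S \<subseteq> {..<c} \<longrightarrow> card S + (m - 1) = m \<longrightarrow> set_mset M \<subseteq> p l ` S \<longrightarrow> size M = m - 1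
            \<longrightarrow> prod (p l) S * prod_mset M \<in> KK G P Q (m - 1)" by (rule psi[OF plP mc ba3 la])
          have "{a} \<subseteq> {..<c}" "card {a} + (m - 1) = m" "set_mset (replicate_mset (m - 1) x) \<subseteq> p l ` {a}"
            "size (replicate_mset (m - 1) x) = m - 1" using a nlc m_def by auto
          then show ?thesis using H by blast
        qed
        have m2: "m = Suc (m - 1)" using nlc m_def by simp
        have "x ^ Suc (m - 1) \<in> KK G P Q (m - 1)" using ps a by simp
        then show ?thesis using power_step[OF finQ QI GI e0] by blast
      qed
    qed
  qed
  have "\<forall>x\<in>P. \<exists>e. x ^ Suc e \<in> JI G P e" using level Ba1 by blast
  then obtain e where e: "\<forall>x\<in>P. x ^ Suc e \<in> JI G P e"
    using common_bound[OF finP ideal_gen_sub] unfolding JI_def by blast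
  define s where "s = card P * e + 1"
  have sub1: "ideal_pow ?I (s + 1) \<subseteq> JI G P s"
  proof -
    have "ideal_gen (Mon P (s + 1)) \<subseteq> JI G P s"
    proof (rule ideal_gen_least[OF JI_ideal], rule subsetI)
      fix z assume "z \<in> Mon P (s + 1)"
      then obtain M where M: "z = prod_mset M" "set_mset M \<subseteq> P" "size M = s + 1" by (rule MonE)
      have "prod_mset M \<in> ideal_mult (ideal_gen G) (ideal_pow ?I (size M - 1))"
        using PH[OF finP ideal_gen_sub, of e "ideal_gen G" M] e M unfolding JI_def s_def by auto
      then show "z \<in> JI G P s" using M unfolding JI_def by simp
    qed
    then show ?thesis using pow_sub_Mon[of P "s + 1"] by blast
  qed
  have sub2: "JI G P s \<subseteq> ideal_pow ?I (s + 1)"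
    unfolding JI_def using ideal_mult_sub_pow[OF GI II] by simp
  have "G \<subseteq> ?I" by (rule GP)
  moreover have "ideal_gen G \<subseteq> ?I" by (rule GI)
  ultimately show ?thesis unfolding is_reduction_def
    using sub1 sub2 unfolding JI_def G_def s_def by (intro conjI exI[of _ "card P * e + 1"]) auto
qed


end
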